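(* The groups $\mathbb{G}_r(N)$, for $(r,N)\in\{1,\infty\}\times\{0,2,3,4,\ldots\}$, are pairwise nonisomorphic as topological groups.
   Context: All groups are Abelian. A value on $G$ is $p\colon G\to[0,\infty)$ with $p(x)=0\iff x=0$, $p(-x)=p(x)$, $p(x+y)\leqslant p(x)+p(y)$; it induces the metric $p(x-y)$ and hence a group topology. Class $\mathcal{O}_0$: $\lim_n p(na)/n=0$ for all $a$. $\mathfrak{G}_r(N)$: separable valued Abelian groups of class $\mathcal{O}_0$ with $p\leqslant r$ (vacuous if $r=\infty$) and of exponent $N$ if $N\neq0$. $\mathbb{G}_r(N)$ is the valued Abelian group, unique up to isometric group isomorphism, which (G1) is complete and in $\mathfrak{G}_r(N)$; (G2) for every finite valued Abelian group $(H,+,q)$ (of exponent $N$ if $N\neq0$) with $q\leqslant r$, subgroup $K$, isometric homomorphism $\varphi\colon K\to\mathbb{G}_r(N)$ and $\varepsilon\in(0,1)$, there is a homomorphism $\varphi_\varepsilon\colon H\to\mathbb{G}_r(N)$ with $p(\varphi(x)-\varphi_\varepsilon(x))\leqslant\varepsilon$ on $K$ and $(1-\varepsilon)q\leqslant p\circ\varphi_\varepsilon\leqslant(1+\varepsilon)q$ on $H$; (G3) if $N=0$, finite-order elements are dense. *)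

theory Defs
  imports "HOL-Algebra.Algebra" "HOL-Library.Extended_Real"
begin

text \<open>Groups are HOL-Algebra commutative groups, written multiplicatively:
  the group operation plays the role of +, the unit the role of 0, inv the role of minus.\<close>

definition valued_group :: "('a, 'm) monoid_scheme \<Rightarrow> ('a \<Rightarrow> real) \<Rightarrow> bool" where
  "valued_group G p \<longleftrightarrow> comm_group G
     \<and> (\<forall>x\<in>carrier G. 0 \<le> p x)
     \<and> (\<forall>x\<in>carrier G. p x = 0 \<longleftrightarrow> x = \<one>\<^bsub>G\<^esub>)
     \<and> (\<forall>x\<in>carrier G. p (inv\<^bsub>G\<^esub> x) = p x)
     \<and> (\<forall>x\<in>carrier G. \<forall>y\<in>carrier G. p (x \<otimes>\<^bsub>G\<^esub> y) \<le> p x + p y)"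

definition vdist :: "('a, 'm) monoid_scheme \<Rightarrow> ('a \<Rightarrow> real) \<Rightarrow> 'a \<Rightarrow> 'a \<Rightarrow> real" where
  "vdist G p x y = p (x \<otimes>\<^bsub>G\<^esub> inv\<^bsub>G\<^esub> y)"

definition class_O0 :: "('a, 'm) monoid_scheme \<Rightarrow> ('a \<Rightarrow> real) \<Rightarrow> bool" where
  "class_O0 G p \<longleftrightarrow> (\<forall>a\<in>carrier G. (\<lambda>n::nat. p (a [^]\<^bsub>G\<^esub> n) / real n) \<longlonglongrightarrow> 0)"

definition separable_vg :: "('a, 'm) monoid_scheme \<Rightarrow> ('a \<Rightarrow> real) \<Rightarrow> bool" where
  "separable_vg G p \<longleftrightarrow> (\<exists>D. countable D \<and> D \<subseteq> carrier G \<and>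
     (\<forall>x\<in>carrier G. \<forall>e>0. \<exists>d\<in>D. vdist G p x d < e))"

definition complete_vg :: "('a, 'm) monoid_scheme \<Rightarrow> ('a \<Rightarrow> real) \<Rightarrow> bool" where
  "complete_vg G p \<longleftrightarrow> (\<forall>s::nat \<Rightarrow> 'a. (\<forall>n. s n \<in> carrier G) \<and>
       (\<forall>e>0. \<exists>M. \<forall>m\<ge>M. \<forall>n\<ge>M. vdist G p (s m) (s n) < e)
     \<longrightarrow> (\<exists>x\<in>carrier G. \<forall>e>0. \<exists>M. \<forall>n\<ge>M. vdist G p (s n) x < e))"

definition has_exponent :: "('a, 'm) monoid_scheme \<Rightarrow> nat \<Rightarrow> bool" where
  "has_exponent G N \<longleftrightarrow> (\<forall>x\<in>carrier G. x [^]\<^bsub>G\<^esub> N = \<one>\<^bsub>G\<^esub>)"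

definition bounded_by :: "('a, 'm) monoid_scheme \<Rightarrow> ('a \<Rightarrow> real) \<Rightarrow> ereal \<Rightarrow> bool" where
  "bounded_by G p r \<longleftrightarrow> (\<forall>x\<in>carrier G. ereal (p x) \<le> r)"

definition in_frakG :: "ereal \<Rightarrow> nat \<Rightarrow> ('a, 'm) monoid_scheme \<Rightarrow> ('a \<Rightarrow> real) \<Rightarrow> bool" where
  "in_frakG r N G p \<longleftrightarrow> valued_group G p \<and> separable_vg G p \<and> class_O0 G p
     \<and> bounded_by G p r \<and> (N \<noteq> 0 \<longrightarrow> has_exponent G N)"

text \<open>(G2). Finite groups H are taken with carrier a subset of nat; every finite
  abelian group is isomorphic to such a group, so this is no restriction.\<close>
definition prop_G2 :: "ereal \<Rightarrow> nat \<Rightarrow> ('a, 'm) monoid_scheme \<Rightarrow> ('a \<Rightarrow> real) \<Rightarrow> bool" where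
  "prop_G2 r N G p \<longleftrightarrow>
    (\<forall>(H :: nat monoid) q K \<phi> \<epsilon>.
       valued_group H q \<and> finite (carrier H) \<and> bounded_by H q r
       \<and> (N \<noteq> 0 \<longrightarrow> has_exponent H N)
       \<and> subgroup K H
       \<and> \<phi> \<in> hom (H\<lparr>carrier := K\<rparr>) G \<and> (\<forall>x\<in>K. p (\<phi> x) = q x)
       \<and> 0 < \<epsilon> \<and> \<epsilon> < 1
     \<longrightarrow> (\<exists>\<psi>. \<psi> \<in> hom H G
            \<and> (\<forall>x\<in>K. vdist G p (\<phi> x) (\<psi> x) \<le> \<epsilon>)
            \<and> (\<forall>x\<in>carrier H. (1 - \<epsilon>) * q x \<le> p (\<psi> x) \<and> p (\<psi> x) \<le> (1 + \<epsilon>) * q x)))"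

definition prop_G3 :: "('a, 'm) monoid_scheme \<Rightarrow> ('a \<Rightarrow> real) \<Rightarrow> bool" where
  "prop_G3 G p \<longleftrightarrow> (\<forall>x\<in>carrier G. \<forall>e>0. \<exists>y\<in>carrier G.
      (\<exists>n::nat. 0 < n \<and> y [^]\<^bsub>G\<^esub> n = \<one>\<^bsub>G\<^esub>) \<and> vdist G p x y < e)"

definition is_bbG :: "ereal \<Rightarrow> nat \<Rightarrow> ('a, 'm) monoid_scheme \<Rightarrow> ('a \<Rightarrow> real) \<Rightarrow> bool" where
  "is_bbG r N G p \<longleftrightarrow> complete_vg G p \<and> in_frakG r N G p \<and> prop_G2 r N G p
     \<and> (N = 0 \<longrightarrow> prop_G3 G p)"

definition vcontinuous :: "('a, 'm) monoid_scheme \<Rightarrow> ('a \<Rightarrow> real) \<Rightarrow>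
    ('b, 'n) monoid_scheme \<Rightarrow> ('b \<Rightarrow> real) \<Rightarrow> ('a \<Rightarrow> 'b) \<Rightarrow> bool" where
  "vcontinuous G p G' p' f \<longleftrightarrow> (\<forall>x\<in>carrier G. \<forall>e>0. \<exists>d>0. \<forall>y\<in>carrier G.
      vdist G p y x < d \<longrightarrow> vdist G' p' (f y) (f x) < e)"

definition top_group_iso :: "('a, 'm) monoid_scheme \<Rightarrow> ('a \<Rightarrow> real) \<Rightarrow>
    ('b, 'n) monoid_scheme \<Rightarrow> ('b \<Rightarrow> real) \<Rightarrow> ('a \<Rightarrow> 'b) \<Rightarrow> bool" where
  "top_group_iso G p G' p' f \<longleftrightarrow> f \<in> hom G G' \<and> bij_betw f (carrier G) (carrier G')
     \<and> vcontinuous G p G' p' f \<and> vcontinuous G' p' G p (inv_into (carrier G) f)"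

end

theory Submission imports Defs begin

definition encP :: "nat \<Rightarrow> nat \<Rightarrow> nat \<Rightarrow> nat" where
  "encP m a b = a mod m + m * (b mod m)"

definition PG :: "nat \<Rightarrow> nat monoid" where
  "PG m = \<lparr>carrier = {..<m*m}, monoid.mult = (\<lambda>x y. encP m (x mod m + y mod m) (x div m + y div m)), one = 0\<rparr>"

lemma encP_lt: "0 < m \<Longrightarrow> encP m a b < m * m"
proof -
  assume m: "0 < m"
  have "a mod m < m" "b mod m < m" using m by auto
  hence "a mod m + m * (b mod m) < m + m * (b mod m)" by simp
  also have "\<dots> = m * (Suc (b mod m))" by simp
  also have "\<dots> \<le> m * m" using \<open>b mod m < m\<close> by (intro mult_le_mono2) simp
  finally show ?thesis by (simp add: encP_def)
qed

lemma encP_mod [simp]: "0 < m \<Longrightarrow> encP m a b mod m = a mod m"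
  by (simp add: encP_def)

lemma encP_div [simp]: "0 < m \<Longrightarrow> encP m a b div m = b mod m"
  by (simp add: encP_def)

lemma encP_cong: "a mod m = a' mod m \<Longrightarrow> b mod m = b' mod m \<Longrightarrow> encP m a b = encP m a' b'"
  by (simp add: encP_def)

lemma encP_self: "x < m * m \<Longrightarrow> encP m (x mod m) (x div m) = x"
proof -
  assume x: "x < m*m"
  hence "x div m < m" by (simp add: less_mult_imp_div_less)
  thus ?thesis by (simp add: encP_def)
qed

lemma PG_carrier [simp]: "carrier (PG m) = {..<m*m}" by (simp add: PG_def)
lemma PG_one [simp]: "\<one>\<^bsub>PG m\<^esub> = 0" by (simp add: PG_def)
lemma PG_mult: "x \<otimes>\<^bsub>PG m\<^esub> y = encP m (x mod m + y mod m) (x div m + y div m)"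
  by (simp add: PG_def)

lemma PG_comm_group:
  assumes m: "0 < m" shows "comm_group (PG m)"
proof (rule comm_groupI)
  fix x y assume "x \<in> carrier (PG m)" "y \<in> carrier (PG m)"
  thus "x \<otimes>\<^bsub>PG m\<^esub> y \<in> carrier (PG m)" using m by (simp add: PG_mult encP_lt)
next
  show "\<one>\<^bsub>PG m\<^esub> \<in> carrier (PG m)" using m by simp
next
  fix x y z assume "x \<in> carrier (PG m)" "y \<in> carrier (PG m)" "z \<in> carrier (PG m)"
  show "x \<otimes>\<^bsub>PG m\<^esub> y \<otimes>\<^bsub>PG m\<^esub> z = x \<otimes>\<^bsub>PG m\<^esub> (y \<otimes>\<^bsub>PG m\<^esub> z)"
    using m by (auto simp: PG_mult intro!: encP_cong simp: mod_add_eq add.assoc mod_add_left_eq mod_add_right_eq)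
next
  fix x y assume "x \<in> carrier (PG m)" "y \<in> carrier (PG m)"
  show "x \<otimes>\<^bsub>PG m\<^esub> y = y \<otimes>\<^bsub>PG m\<^esub> x" by (simp add: PG_mult add.commute)
next
  fix x assume "x \<in> carrier (PG m)"
  thus "\<one>\<^bsub>PG m\<^esub> \<otimes>\<^bsub>PG m\<^esub> x = x" by (simp add: PG_mult encP_self)
next
  fix x assume x: "x \<in> carrier (PG m)"
  show "\<exists>y\<in>carrier (PG m). y \<otimes>\<^bsub>PG m\<^esub> x = \<one>\<^bsub>PG m\<^esub>"
  proof (intro bexI)
    have xd: "x div m < m" using x by (simp add: less_mult_imp_div_less)
    have e1: "((m - x mod m) mod m + x mod m) mod m = 0 mod m"
      using m by (simp add: mod_add_left_eq)
    have e2: "((m - x div m) mod m + x div m) mod m = 0 mod m"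
      using m xd by (simp add: mod_add_left_eq)
    have "encP m (m - x mod m) (m - x div m) \<otimes>\<^bsub>PG m\<^esub> x = encP m 0 0"
      using m by (simp add: PG_mult) (rule encP_cong[OF e1 e2])
    thus "encP m (m - x mod m) (m - x div m) \<otimes>\<^bsub>PG m\<^esub> x = \<one>\<^bsub>PG m\<^esub>"
      by (simp add: encP_def)
    show "encP m (m - x mod m) (m - x div m) \<in> carrier (PG m)" using m by (simp add: encP_lt)
  qed
qed

lemma PG_pow: assumes m: "0 < m" and x: "x \<in> carrier (PG m)"
  shows "x [^]\<^bsub>PG m\<^esub> (j::nat) = encP m (j * (x mod m)) (j * (x div m))"
proof (induction j)
  case 0 show ?case using m by (simp add: encP_def)
next
  case (Suc j)
  show ?case using m x by (simp add: Suc PG_mult) (rule encP_cong; simp add: mod_add_left_eq mod_add_right_eq add.commute)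
qed

lemma PG_inv: assumes m: "0 < m" and x: "x \<in> carrier (PG m)"
  shows "inv\<^bsub>PG m\<^esub> x = encP m (m - x mod m) (m - x div m)"
proof -
  interpret comm_group "PG m" by (rule PG_comm_group[OF m])
  have xd: "x div m < m" using x by (simp add: less_mult_imp_div_less)
  have e1: "((m - x mod m) mod m + x mod m) mod m = 0 mod m"
    using m by (simp add: mod_add_left_eq)
  have e2: "((m - x div m) mod m + x div m) mod m = 0 mod m"
    using m xd by (simp add: mod_add_left_eq)
  have "encP m (m - x mod m) (m - x div m) \<otimes>\<^bsub>PG m\<^esub> x = encP m 0 0"
    using m by (simp add: PG_mult) (rule encP_cong[OF e1 e2])
  hence "encP m (m - x mod m) (m - x div m) \<otimes>\<^bsub>PG m\<^esub> x = \<one>\<^bsub>PG m\<^esub>"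
    by (simp add: encP_def)
  thus ?thesis using x m by (intro inv_equality) (auto simp: encP_lt)
qed

lemma PG_exp: assumes m: "0 < m" and x: "x \<in> carrier (PG m)" and d: "m dvd N"
  shows "x [^]\<^bsub>PG m\<^esub> N = 0"
proof -
  have "x [^]\<^bsub>PG m\<^esub> N = encP m (N * (x mod m)) (N * (x div m))" by (rule PG_pow[OF m x])
  also have "\<dots> = encP m 0 0" using d by (intro encP_cong) auto
  also have "\<dots> = 0" by (simp add: encP_def)
  finally show ?thesis .
qed

lemma pow_mod_ord:
  fixes G (structure)
  assumes "group G" "z \<in> carrier G" "z [^]\<^bsub>G\<^esub> m = \<one>\<^bsub>G\<^esub>"
  shows "z [^]\<^bsub>G\<^esub> (j mod m) = z [^]\<^bsub>G\<^esub> (j::nat)"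
proof -
  interpret group G by fact
  have "z [^] j = z [^] (j mod m + m * (j div m))" by (simp add: mod_mult_div_eq)
  also have "\<dots> = z [^] (j mod m) \<otimes> (z [^] m) [^] (j div m)"
    using assms(2) by (simp add: nat_pow_mult nat_pow_pow)
  also have "\<dots> = z [^] (j mod m)" using assms by simp
  finally show ?thesis by simp
qed

lemma bbG_vg: "is_bbG r N G p \<Longrightarrow> valued_group G p"
  by (simp add: is_bbG_def in_frakG_def)

lemma vg_group: "valued_group G p \<Longrightarrow> comm_group G"
  by (simp add: valued_group_def)

lemma cyc_elem:
  assumes bb: "is_bbG r N G p" and k: "2 \<le> k" and kd: "N \<noteq> 0 \<longrightarrow> k dvd N"
    and c: "0 < c" "ereal c \<le> r"
  shows "\<exists>x\<in>carrier G. c/2 \<le> p x \<and> (\<forall>j. 0 < j \<and> j < k \<longrightarrow> x [^]\<^bsub>G\<^esub> j \<noteq> \<one>\<^bsub>G\<^esub>)"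
proof -
  have vg: "valued_group G p" using bb by (rule bbG_vg)
  interpret G: comm_group G using vg by (rule vg_group)
  have k0: "0 < k" using k by simp
  interpret H: comm_group "PG k" by (rule PG_comm_group[OF k0])
  define q where "q = (\<lambda>x::nat. if x = 0 then 0 else c)"
  have vgH: "valued_group (PG k) q"
    unfolding valued_group_def
  proof (intro conjI ballI)
    show "comm_group (PG k)" by (rule H.comm_group_axioms)
  next
    fix x show "0 \<le> q x" using c by (simp add: q_def)
  next
    fix x assume "x \<in> carrier (PG k)" show "(q x = 0) = (x = \<one>\<^bsub>PG k\<^esub>)" using c by (simp add: q_def)
  next
    fix x assume x: "x \<in> carrier (PG k)"
    have "(inv\<^bsub>PG k\<^esub> x = 0) = (x = 0)"
      using H.inv_eq_1_iff[OF x] by simp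
    thus "q (inv\<^bsub>PG k\<^esub> x) = q x" by (simp add: q_def)
  next
    fix x y assume x: "x \<in> carrier (PG k)" and y: "y \<in> carrier (PG k)"
    show "q (x \<otimes>\<^bsub>PG k\<^esub> y) \<le> q x + q y"
    proof (cases "x = 0")
      case True thus ?thesis using y H.l_one[OF y] c by (simp add: q_def)
    next
      case False thus ?thesis using c by (simp add: q_def)
    qed
  qed
  have G2: "prop_G2 r N G p" using bb by (simp add: is_bbG_def)
  have sub: "subgroup {0} (PG k)" using H.triv_subgroup by simp
  have hom: "(\<lambda>_. \<one>\<^bsub>G\<^esub>) \<in> hom ((PG k)\<lparr>carrier := {0}\<rparr>) G"
    by (simp add: hom_def)
  have p1: "p \<one>\<^bsub>G\<^esub> = 0" using vg by (simp add: valued_group_def)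
  have bd: "bounded_by (PG k) q r"
    unfolding bounded_by_def q_def using c by (auto simp: zero_ereal_def[symmetric] intro: order_trans[of _ "ereal c"])
  have ex: "N \<noteq> 0 \<longrightarrow> has_exponent (PG k) N"
    using kd PG_exp[OF k0] by (simp add: has_exponent_def)
  have pre: "valued_group (PG k) q \<and> finite (carrier (PG k)) \<and> bounded_by (PG k) q r
       \<and> (N \<noteq> 0 \<longrightarrow> has_exponent (PG k) N) \<and> subgroup {0} (PG k)
       \<and> (\<lambda>_. \<one>\<^bsub>G\<^esub>) \<in> hom ((PG k)\<lparr>carrier := {0}\<rparr>) G
       \<and> (\<forall>x\<in>{0}. p ((\<lambda>_. \<one>\<^bsub>G\<^esub>) x) = q x) \<and> 0 < (1/2::real) \<and> (1/2::real) < 1"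
    using vgH bd ex sub hom p1 by (simp add: q_def)
  obtain \<psi> where psi: "\<psi> \<in> hom (PG k) G"
    and est: "\<forall>x\<in>carrier (PG k). (1 - 1/2) * q x \<le> p (\<psi> x) \<and> p (\<psi> x) \<le> (1 + 1/2) * q x"
    using G2[unfolded prop_G2_def, rule_format, OF pre] by blast
  have one_in: "1 \<in> carrier (PG k)" using k by (simp add: less_le_trans[OF _ le_square])
  show ?thesis
  proof (intro bexI conjI allI impI)
    show "\<psi> 1 \<in> carrier G" using psi one_in by (rule hom_in_carrier)
    have "(1 - 1/2) * q 1 \<le> p (\<psi> 1)" using est one_in by blast
    thus "c / 2 \<le> p (\<psi> 1)" by (simp add: q_def)
  next
    fix j assume j: "0 < j \<and> j < k"
    have "\<psi> 1 [^]\<^bsub>G\<^esub> j = \<psi> (1 [^]\<^bsub>PG k\<^esub> j)"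
      using hom_nat_pow[OF psi one_in H.is_group G.is_group] by simp
    also have "1 [^]\<^bsub>PG k\<^esub> j = encP k j 0" using PG_pow[OF k0 one_in] k by simp
    also have "encP k j 0 = j" using j by (simp add: encP_def)
    finally have e: "\<psi> 1 [^]\<^bsub>G\<^esub> j = \<psi> j" .
    have jc: "j \<in> carrier (PG k)" using j k by (simp add: less_le_trans[OF _ le_square])
    have "(1 - 1/2) * q j \<le> p (\<psi> j)" using est jc by blast
    hence "c/2 \<le> p (\<psi> j)" using j by (simp add: q_def)
    thus "\<psi> 1 [^]\<^bsub>G\<^esub> j \<noteq> \<one>\<^bsub>G\<^esub>" using e p1 c by auto
  qed
qed

definition lprod :: "('a, 'm) monoid_scheme \<Rightarrow> 'a list \<Rightarrow> 'a" where
  "lprod G xs = foldr (\<lambda>a b. a \<otimes>\<^bsub>G\<^esub> b) xs \<one>\<^bsub>G\<^esub>"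

lemma lprod_Nil [simp]: "lprod G [] = \<one>\<^bsub>G\<^esub>" by (simp add: lprod_def)
lemma lprod_Cons [simp]: "lprod G (x # xs) = x \<otimes>\<^bsub>G\<^esub> lprod G xs" by (simp add: lprod_def)

lemma lprod_closed: "monoid G \<Longrightarrow> set xs \<subseteq> carrier G \<Longrightarrow> lprod G xs \<in> carrier G"
  by (induction xs) (auto intro: monoid.m_closed)

lemma lprod_append: "monoid G \<Longrightarrow> set xs \<subseteq> carrier G \<Longrightarrow> set ys \<subseteq> carrier G \<Longrightarrow>
   lprod G (xs @ ys) = lprod G xs \<otimes>\<^bsub>G\<^esub> lprod G ys"
  by (induction xs) (auto simp: monoid.m_assoc lprod_closed)

lemma lprod_hom: "group G \<Longrightarrow> group H \<Longrightarrow> f \<in> hom G H \<Longrightarrow> set xs \<subseteq> carrier G \<Longrightarrow>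
   f (lprod G xs) = lprod H (map f xs)"
  by (induction xs) (auto simp: hom_one hom_mult lprod_closed group.is_monoid)

lemma lprod_val: "valued_group G p \<Longrightarrow> set xs \<subseteq> carrier G \<Longrightarrow> (\<forall>y\<in>set xs. p y < d) \<Longrightarrow>
   p (lprod G xs) \<le> real (length xs) * d"
proof (induction xs)
  case Nil
  have "monoid G" using Nil.prems by (simp add: valued_group_def comm_group_def group_def)
  hence "\<one>\<^bsub>G\<^esub> \<in> carrier G" by (rule monoid.one_closed)
  hence "p \<one>\<^bsub>G\<^esub> = 0" using Nil.prems unfolding valued_group_def by blast
  thus ?case by simp
next
  case (Cons x xs)
  have g: "monoid G" using Cons.prems by (simp add: valued_group_def comm_group_def group_def)
  have "p (lprod G (x # xs)) \<le> p x + p (lprod G xs)"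
    using Cons.prems lprod_closed[OF g, of xs] by (simp add: valued_group_def)
  also have "\<dots> \<le> d + real (length xs) * d" using Cons by force
  finally show ?case by (simp add: algebra_simps)
qed

definition Bnd :: "('a, 'm) monoid_scheme \<Rightarrow> ('a \<Rightarrow> real) \<Rightarrow> bool" where
  "Bnd G p \<longleftrightarrow> (\<forall>d>0. \<exists>n. \<forall>x\<in>carrier G. \<exists>xs. set xs \<subseteq> carrier G \<and> (\<forall>y\<in>set xs. p y < d)
       \<and> length xs \<le> n \<and> lprod G xs = x)"

lemma vdist_one: "valued_group G p \<Longrightarrow> y \<in> carrier G \<Longrightarrow> vdist G p y \<one>\<^bsub>G\<^esub> = p y"
  by (simp add: vdist_def valued_group_def comm_group_def monoid.inv_one monoid.r_one group.is_monoid)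

lemma Bnd_transfer1:
  assumes vg: "valued_group G p" and vg': "valued_group G' p'"
    and iso: "top_group_iso G p G' p' f" and B: "Bnd G p"
  shows "Bnd G' p'"
  unfolding Bnd_def
proof (intro allI impI)
  fix d' :: real assume d': "0 < d'"
  have g: "group G" and g': "group G'" using vg vg' by (simp_all add: valued_group_def comm_group_def)
  have hom: "f \<in> hom G G'" and bij: "bij_betw f (carrier G) (carrier G')"
    and cont: "vcontinuous G p G' p' f" using iso by (simp_all add: top_group_iso_def)
  have f1: "f \<one>\<^bsub>G\<^esub> = \<one>\<^bsub>G'\<^esub>" using hom_one[OF hom g g'] .
  obtain d where d: "d > 0" and dd: "\<forall>y\<in>carrier G. vdist G p y \<one>\<^bsub>G\<^esub> < d \<longrightarrow>
      vdist G' p' (f y) (f \<one>\<^bsub>G\<^esub>) < d'"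
    using cont d' monoid.one_closed[OF group.is_monoid[OF g]] unfolding vcontinuous_def by blast
  obtain n where n: "\<forall>x\<in>carrier G. \<exists>xs. set xs \<subseteq> carrier G \<and> (\<forall>y\<in>set xs. p y < d)
       \<and> length xs \<le> n \<and> lprod G xs = x" using B d unfolding Bnd_def by blast
  have "\<forall>x'\<in>carrier G'. \<exists>xs. set xs \<subseteq> carrier G' \<and> (\<forall>y\<in>set xs. p' y < d')
       \<and> length xs \<le> n \<and> lprod G' xs = x'"
  proof
    fix x' assume x': "x' \<in> carrier G'"
    have "x' \<in> f ` carrier G" using bij x' by (simp add: bij_betw_def)
    then obtain x where x: "x \<in> carrier G" "f x = x'" by (rule imageE) (rule that, auto)
    then obtain xs where xs: "set xs \<subseteq> carrier G" "\<forall>y\<in>set xs. p y < d" "length xs \<le> n" "lprod G xs = x"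
      using n by blast
    have sm: "\<forall>y\<in>set (map f xs). p' y < d'"
    proof
      fix y' assume "y' \<in> set (map f xs)"
      then obtain y where y: "y \<in> set xs" "y' = f y" by auto
      have yc: "y \<in> carrier G" using y xs by auto
      have "vdist G' p' (f y) (f \<one>\<^bsub>G\<^esub>) < d'" using dd yc xs y vdist_one[OF vg yc] by auto
      thus "p' y' < d'" using y f1 vdist_one[OF vg' hom_in_carrier[OF hom yc]] by simp
    qed
    have c1: "set (map f xs) \<subseteq> carrier G'" using xs(1) hom_in_carrier[OF hom] by auto
    have c2: "lprod G' (map f xs) = x'" using lprod_hom[OF g g' hom xs(1)] x xs(4) by simp
    have c3: "length (map f xs) \<le> n" using xs(3) by simp
    show "\<exists>xs. set xs \<subseteq> carrier G' \<and> (\<forall>y\<in>set xs. p' y < d') \<and> length xs \<le> n \<and> lprod G' xs = x'"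
      using c1 c2 c3 sm by blast
  qed
  thus "\<exists>n. \<forall>x\<in>carrier G'. \<exists>xs. set xs \<subseteq> carrier G' \<and> (\<forall>y\<in>set xs. p' y < d')
       \<and> length xs \<le> n \<and> lprod G' xs = x" by blast
qed

lemma Bnd_transfer2:
  assumes vg: "valued_group G p" and vg': "valued_group G' p'"
    and iso: "top_group_iso G p G' p' f" and B: "Bnd G' p'"
  shows "Bnd G p"
  unfolding Bnd_def
proof (intro allI impI)
  fix d' :: real assume d': "0 < d'"
  have g: "group G" and g': "group G'" using vg vg' by (simp_all add: valued_group_def comm_group_def)
  have hom: "f \<in> hom G G'" and bij: "bij_betw f (carrier G) (carrier G')"
    and cont: "vcontinuous G' p' G p (inv_into (carrier G) f)" using iso by (simp_all add: top_group_iso_def)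
  define g where "g = inv_into (carrier G) f"
  have f1: "f \<one>\<^bsub>G\<^esub> = \<one>\<^bsub>G'\<^esub>" using hom_one[OF hom g g'] .
  have inj: "inj_on f (carrier G)" using bij by (simp add: bij_betw_def)
  have g1: "g \<one>\<^bsub>G'\<^esub> = \<one>\<^bsub>G\<^esub>" using f1 inv_into_f_f[OF inj monoid.one_closed[OF group.is_monoid[OF g]]] by (simp add: g_def)
  have gc: "\<And>y. y \<in> carrier G' \<Longrightarrow> g y \<in> carrier G \<and> f (g y) = y"
    using bij unfolding g_def bij_betw_def by (auto intro: inv_into_into f_inv_into_f)
  obtain d where d: "d > 0" and dd: "\<forall>y\<in>carrier G'. vdist G' p' y \<one>\<^bsub>G'\<^esub> < d \<longrightarrow>
      vdist G p (g y) (g \<one>\<^bsub>G'\<^esub>) < d'"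
    using cont d' monoid.one_closed[OF group.is_monoid[OF g']] unfolding vcontinuous_def g_def by blast
  obtain n where n: "\<forall>x\<in>carrier G'. \<exists>xs. set xs \<subseteq> carrier G' \<and> (\<forall>y\<in>set xs. p' y < d)
       \<and> length xs \<le> n \<and> lprod G' xs = x" using B d unfolding Bnd_def by blast
  have "\<forall>x\<in>carrier G. \<exists>xs. set xs \<subseteq> carrier G \<and> (\<forall>y\<in>set xs. p y < d')
       \<and> length xs \<le> n \<and> lprod G xs = x"
  proof
    fix x assume x: "x \<in> carrier G"
    then obtain ys where ys: "set ys \<subseteq> carrier G'" "\<forall>y\<in>set ys. p' y < d" "length ys \<le> n" "lprod G' ys = f x"
      using n hom_in_carrier[OF hom x] by blast
    have xs: "set (map g ys) \<subseteq> carrier G" using ys gc by auto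
    have sm: "\<forall>y\<in>set (map g ys). p y < d'"
    proof
      fix y assume "y \<in> set (map g ys)"
      then obtain y' where y: "y' \<in> set ys" "y = g y'" by auto
      have yc: "y' \<in> carrier G'" using y ys by auto
      have "vdist G p (g y') (g \<one>\<^bsub>G'\<^esub>) < d'" using dd yc ys y vdist_one[OF vg' yc] by auto
      thus "p y < d'" using y g1 vdist_one[OF vg] gc[OF yc] by simp
    qed
    have "map (f \<circ> g) ys = ys" by (rule map_idI) (use ys(1) gc in auto)
    hence "map f (map g ys) = ys" by simp
    hence "f (lprod G (map g ys)) = f x" using lprod_hom[OF g g' hom xs] ys by simp
    hence "lprod G (map g ys) = x"
      using inj x lprod_closed[OF group.is_monoid[OF g] xs] by (auto dest: inj_onD)
    thus "\<exists>xs. set xs \<subseteq> carrier G \<and> (\<forall>y\<in>set xs. p y < d') \<and> length xs \<le> n \<and> lprod G xs = x"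
      using xs sm ys by (intro exI[of _ "map g ys"]) auto
  qed
  thus "\<exists>n. \<forall>x\<in>carrier G. \<exists>xs. set xs \<subseteq> carrier G \<and> (\<forall>y\<in>set xs. p y < d')
       \<and> length xs \<le> n \<and> lprod G xs = x" by blast
qed

lemma not_Bnd_infty:
  assumes bb: "is_bbG \<infinity> N G p" and N: "N \<noteq> 1"
  shows "\<not> Bnd G p"
proof
  assume B: "Bnd G p"
  have vg: "valued_group G p" using bb by (rule bbG_vg)
  obtain n where n: "\<forall>x\<in>carrier G. \<exists>xs. set xs \<subseteq> carrier G \<and> (\<forall>y\<in>set xs. p y < 1)
       \<and> length xs \<le> n \<and> lprod G xs = x" using B unfolding Bnd_def by (meson zero_less_one)
  define k where "k = (if N = 0 then 2 else N)"
  have k: "2 \<le> k" "N \<noteq> 0 \<longrightarrow> k dvd N" using N by (auto simp: k_def)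
  obtain x where x: "x \<in> carrier G" "(2 * real n + 2) / 2 \<le> p x"
    using cyc_elem[OF bb k, of "2 * real n + 2"] by auto
  then obtain xs where xs: "set xs \<subseteq> carrier G" "\<forall>y\<in>set xs. p y < 1" "length xs \<le> n" "lprod G xs = x"
    using n by blast
  have "p x \<le> real (length xs) * 1" using lprod_val[OF vg xs(1,2)] xs(4) by simp
  also have "\<dots> \<le> real n" using xs(3) by simp
  finally show False using x by simp
qed

lemma split_step:
  fixes m :: nat
  assumes bb: "is_bbG 1 N G p" and z: "z \<in> carrier G" and m: "0 < m" "z [^]\<^bsub>G\<^esub> m = \<one>\<^bsub>G\<^esub>"
    and mmin: "\<forall>j. 0 < j \<and> j < m \<longrightarrow> z [^]\<^bsub>G\<^esub> j \<noteq> \<one>\<^bsub>G\<^esub>"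
    and e: "0 < \<epsilon>" "\<epsilon> < 1"
  shows "\<exists>e h1 h2. e \<in> carrier G \<and> h1 \<in> carrier G \<and> h2 \<in> carrier G
     \<and> z = e \<otimes>\<^bsub>G\<^esub> (h1 \<otimes>\<^bsub>G\<^esub> h2) \<and> p e \<le> \<epsilon>
     \<and> p h1 \<le> (1 + \<epsilon>) * p z / 2 \<and> p h2 \<le> (1 + \<epsilon>) * p z / 2
     \<and> h1 [^]\<^bsub>G\<^esub> m = \<one>\<^bsub>G\<^esub> \<and> h2 [^]\<^bsub>G\<^esub> m = \<one>\<^bsub>G\<^esub>"
proof -
  have vg: "valued_group G p" using bb by (rule bbG_vg)
  interpret G: comm_group G using vg by (rule vg_group)
  interpret H: comm_group "PG m" by (rule PG_comm_group[OF m(1)])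
  have pnn: "\<And>x. x \<in> carrier G \<Longrightarrow> 0 \<le> p x" and p0: "\<And>x. x \<in> carrier G \<Longrightarrow> p x = 0 \<longleftrightarrow> x = \<one>\<^bsub>G\<^esub>"
    and pinv: "\<And>x. x \<in> carrier G \<Longrightarrow> p (inv\<^bsub>G\<^esub> x) = p x"
    and ptri: "\<And>x y. x \<in> carrier G \<Longrightarrow> y \<in> carrier G \<Longrightarrow> p (x \<otimes>\<^bsub>G\<^esub> y) \<le> p x + p y"
    using vg by (auto simp: valued_group_def)
  have pb: "\<And>x. x \<in> carrier G \<Longrightarrow> p x \<le> 1"
    using bb by (auto simp: is_bbG_def in_frakG_def bounded_by_def)
  have pm: "\<And>j. z [^]\<^bsub>G\<^esub> (j mod m) = z [^]\<^bsub>G\<^esub> j" using pow_mod_ord[OF G.is_group z m(2)] .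
  define \<pi> where "\<pi> = (\<lambda>j::nat. p (z [^]\<^bsub>G\<^esub> j))"
  have pi_nn: "\<And>j. 0 \<le> \<pi> j" using pnn z by (simp add: \<pi>_def)
  have pi_le1: "\<And>j. \<pi> j \<le> 1" using pb z by (simp add: \<pi>_def)
  have pi0: "\<And>j. j < m \<Longrightarrow> \<pi> j = 0 \<longleftrightarrow> j = 0"
    using p0 z mmin by (auto simp: \<pi>_def)
  have pi_add: "\<And>a b. \<pi> ((a + b) mod m) \<le> \<pi> a + \<pi> b"
    using ptri z by (simp add: \<pi>_def pm G.nat_pow_mult[symmetric])
  have pi_neg: "\<And>a. a \<le> m \<Longrightarrow> \<pi> (m - a) = \<pi> a"
  proof -
    fix a assume a: "a \<le> m"
    have "z [^]\<^bsub>G\<^esub> (m - a) \<otimes>\<^bsub>G\<^esub> z [^]\<^bsub>G\<^esub> a = \<one>\<^bsub>G\<^esub>"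
      using a z m by (simp add: G.nat_pow_mult)
    hence "inv\<^bsub>G\<^esub> (z [^]\<^bsub>G\<^esub> a) = z [^]\<^bsub>G\<^esub> (m - a)" using z by (intro G.inv_equality) auto
    thus "\<pi> (m - a) = \<pi> a" using pinv z by (metis G.nat_pow_closed \<pi>_def)
  qed
  have pi_1: "\<pi> (1 mod m) = p z" using pm[of 1] z by (simp add: \<pi>_def)
  have pi_0: "\<pi> 0 = 0" using p0 by (simp add: \<pi>_def)
  define q where "q = (\<lambda>x::nat. (\<pi> (x mod m) + \<pi> (x div m)) / 2)"
  have xd: "\<And>x. x \<in> carrier (PG m) \<Longrightarrow> x div m < m" by (simp add: less_mult_imp_div_less)
  have vgH: "valued_group (PG m) q"
    unfolding valued_group_def
  proof (intro conjI ballI)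
    show "comm_group (PG m)" by (rule H.comm_group_axioms)
  next
    fix x show "0 \<le> q x" using pi_nn by (simp add: q_def add_nonneg_nonneg)
  next
    fix x assume x: "x \<in> carrier (PG m)"
    have "q x = 0 \<longleftrightarrow> \<pi> (x mod m) = 0 \<and> \<pi> (x div m) = 0"
      using pi_nn[of "x mod m"] pi_nn[of "x div m"] by (auto simp: q_def)
    also have "\<dots> \<longleftrightarrow> x mod m = 0 \<and> x div m = 0" using pi0 xd[OF x] m by simp
    also have "\<dots> \<longleftrightarrow> x = 0" using m by (metis div_0 div_mult_mod_eq mod_0 mult_0_right add_0)
    finally show "(q x = 0) = (x = \<one>\<^bsub>PG m\<^esub>)" by simp
  next
    fix x assume x: "x \<in> carrier (PG m)"
    have a: "(m - x mod m) mod m = (if x mod m = 0 then 0 else m - x mod m)" using m by auto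
    have b: "(m - x div m) mod m = (if x div m = 0 then 0 else m - x div m)" using m xd[OF x] by auto
    have "\<pi> ((m - x mod m) mod m) = \<pi> (x mod m)" using a pi_neg[of "x mod m"] m by auto
    moreover have "\<pi> ((m - x div m) mod m) = \<pi> (x div m)" using b pi_neg[of "x div m"] xd[OF x] by auto
    ultimately show "q (inv\<^bsub>PG m\<^esub> x) = q x" using PG_inv[OF m(1) x] m by (simp add: q_def)
  next
    fix x y assume x: "x \<in> carrier (PG m)" and y: "y \<in> carrier (PG m)"
    show "q (x \<otimes>\<^bsub>PG m\<^esub> y) \<le> q x + q y"
    proof -
      have "q (x \<otimes>\<^bsub>PG m\<^esub> y) = (\<pi> ((x mod m + y mod m) mod m) + \<pi> ((x div m + y div m) mod m)) / 2"
        using m by (simp add: PG_mult q_def)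
      moreover have "q x + q y = ((\<pi> (x mod m) + \<pi> (y mod m)) + (\<pi> (x div m) + \<pi> (y div m))) / 2"
        by (simp add: q_def field_simps)
      ultimately show ?thesis
        using pi_add[of "x mod m" "y mod m"] pi_add[of "x div m" "y div m"] by (simp add: divide_right_mono)
    qed
  qed
  have G2: "prop_G2 1 N G p" using bb by (simp add: is_bbG_def)
  define K where "K = {x \<in> carrier (PG m). x mod m = x div m}"
  have sub: "subgroup K (PG m)"
  proof (rule H.subgroupI)
    show "K \<subseteq> carrier (PG m)" by (auto simp: K_def)
    show "K \<noteq> {}" using m by (auto simp: K_def intro!: exI[of _ 0])
  next
    fix x assume x: "x \<in> K"
    hence xc: "x \<in> carrier (PG m)" by (simp add: K_def)
    show "inv\<^bsub>PG m\<^esub> x \<in> K" using x PG_inv[OF m(1) xc] m H.inv_closed[OF xc]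
      by (simp add: K_def)
  next
    fix x y assume x: "x \<in> K" and y: "y \<in> K"
    show "x \<otimes>\<^bsub>PG m\<^esub> y \<in> K" using x y m H.m_closed[of x y]
      by (simp add: K_def PG_mult)
  qed
  define \<phi> where "\<phi> = (\<lambda>x::nat. z [^]\<^bsub>G\<^esub> (x mod m))"
  have hom: "\<phi> \<in> hom ((PG m)\<lparr>carrier := K\<rparr>) G"
    unfolding hom_def
  proof (intro CollectI conjI ballI)
    show "\<phi> \<in> carrier (PG m\<lparr>carrier := K\<rparr>) \<rightarrow> carrier G" using z by (auto simp: \<phi>_def)
  next
    fix x y assume "x \<in> carrier (PG m\<lparr>carrier := K\<rparr>)" "y \<in> carrier (PG m\<lparr>carrier := K\<rparr>)"
    show "\<phi> (x \<otimes>\<^bsub>PG m\<lparr>carrier := K\<rparr>\<^esub> y) = \<phi> x \<otimes>\<^bsub>G\<^esub> \<phi> y"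
    proof -
      have "\<phi> (x \<otimes>\<^bsub>PG m\<lparr>carrier := K\<rparr>\<^esub> y) = z [^]\<^bsub>G\<^esub> ((x mod m + y mod m) mod m)"
        using m by (simp add: \<phi>_def PG_mult)
      also have "\<dots> = z [^]\<^bsub>G\<^esub> (x mod m + y mod m)" by (rule pm)
      also have "\<dots> = \<phi> x \<otimes>\<^bsub>G\<^esub> \<phi> y" using z by (simp add: \<phi>_def G.nat_pow_mult)
      finally show ?thesis .
    qed
  qed
  have iso: "\<forall>x\<in>K. p (\<phi> x) = q x" by (auto simp: K_def \<phi>_def q_def \<pi>_def)
  have bd: "bounded_by (PG m) q 1"
    unfolding bounded_by_def q_def using pi_le1
    by (auto simp: one_ereal_def[symmetric]) (smt (verit, best) field_sum_of_halves)
  have md: "N \<noteq> 0 \<longrightarrow> m dvd N"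
  proof
    assume N: "N \<noteq> 0"
    have "z [^]\<^bsub>G\<^esub> N = \<one>\<^bsub>G\<^esub>" using bb N z by (auto simp: is_bbG_def in_frakG_def has_exponent_def)
    hence "z [^]\<^bsub>G\<^esub> (N mod m) = \<one>\<^bsub>G\<^esub>" using pm by simp
    hence "N mod m = 0" using mmin m by (meson mod_less_divisor neq0_conv)
    thus "m dvd N" by auto
  qed
  have ex: "N \<noteq> 0 \<longrightarrow> has_exponent (PG m) N"
    using md PG_exp[OF m(1)] by (simp add: has_exponent_def)
  have pre: "valued_group (PG m) q \<and> finite (carrier (PG m)) \<and> bounded_by (PG m) q 1
       \<and> (N \<noteq> 0 \<longrightarrow> has_exponent (PG m) N) \<and> subgroup K (PG m)
       \<and> \<phi> \<in> hom ((PG m)\<lparr>carrier := K\<rparr>) G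
       \<and> (\<forall>x\<in>K. p (\<phi> x) = q x) \<and> 0 < \<epsilon> \<and> \<epsilon> < 1"
    using vgH bd ex sub hom iso e by simp
  obtain \<psi> where psi: "\<psi> \<in> hom (PG m) G"
    and close: "\<forall>x\<in>K. vdist G p (\<phi> x) (\<psi> x) \<le> \<epsilon>"
    and est: "\<forall>x\<in>carrier (PG m). (1 - \<epsilon>) * q x \<le> p (\<psi> x) \<and> p (\<psi> x) \<le> (1 + \<epsilon>) * q x"
    using G2[unfolded prop_G2_def, rule_format, OF pre] by blast
  define u1 where "u1 = encP m 1 0"
  define u2 where "u2 = encP m 0 1"
  define dd where "dd = encP m 1 1"
  have u1c: "u1 \<in> carrier (PG m)" and u2c: "u2 \<in> carrier (PG m)" and ddc: "dd \<in> carrier (PG m)"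
    using m by (simp_all add: u1_def u2_def dd_def encP_lt)
  have dprod: "dd = u1 \<otimes>\<^bsub>PG m\<^esub> u2" using m by (simp add: u1_def u2_def dd_def PG_mult encP_cong)
  have ddK: "dd \<in> K" using m ddc by (simp add: K_def dd_def)
  define h1 where "h1 = \<psi> u1"
  define h2 where "h2 = \<psi> u2"
  have h1c: "h1 \<in> carrier G" and h2c: "h2 \<in> carrier G"
    using psi u1c u2c by (simp_all add: h1_def h2_def hom_in_carrier)
  have psd: "\<psi> dd = h1 \<otimes>\<^bsub>G\<^esub> h2" using dprod psi u1c u2c by (simp add: hom_mult h1_def h2_def)
  have phd: "\<phi> dd = z" using m pm[of 1] z by (simp add: \<phi>_def dd_def)
  define e where "e = z \<otimes>\<^bsub>G\<^esub> inv\<^bsub>G\<^esub> (h1 \<otimes>\<^bsub>G\<^esub> h2)"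
  have ec: "e \<in> carrier G" using z h1c h2c by (simp add: e_def)
  have "vdist G p (\<phi> dd) (\<psi> dd) \<le> \<epsilon>" using close ddK by blast
  hence pe: "p e \<le> \<epsilon>" using psd phd by (simp add: vdist_def e_def)
  have zeq: "z = e \<otimes>\<^bsub>G\<^esub> (h1 \<otimes>\<^bsub>G\<^esub> h2)"
    using z h1c h2c by (simp add: e_def G.m_assoc)
  have q1: "q u1 = p z / 2" using m pi_1 pi_0 by (simp add: q_def u1_def)
  have q2: "q u2 = p z / 2" using m pi_1 pi_0 by (simp add: q_def u2_def)
  have "p (\<psi> u1) \<le> (1 + \<epsilon>) * q u1" using est u1c by blast
  hence ph1: "p h1 \<le> (1 + \<epsilon>) * p z / 2" using q1 by (simp add: h1_def)
  have "p (\<psi> u2) \<le> (1 + \<epsilon>) * q u2" using est u2c by blast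
  hence ph2: "p h2 \<le> (1 + \<epsilon>) * p z / 2" using q2 by (simp add: h2_def)
  have o1: "h1 [^]\<^bsub>G\<^esub> m = \<one>\<^bsub>G\<^esub>"
    using hom_nat_pow[OF psi u1c H.is_group G.is_group, of m] PG_exp[OF m(1) u1c dvd_refl]
      hom_one[OF psi H.is_group G.is_group] by (simp add: h1_def)
  have o2: "h2 [^]\<^bsub>G\<^esub> m = \<one>\<^bsub>G\<^esub>"
    using hom_nat_pow[OF psi u2c H.is_group G.is_group, of m] PG_exp[OF m(1) u2c dvd_refl]
      hom_one[OF psi H.is_group G.is_group] by (simp add: h2_def)
  show ?thesis using ec h1c h2c zeq pe ph1 ph2 o1 o2 by blast
qed

lemma fin_split:
  assumes bb: "is_bbG 1 N G p" and d: "0 < \<delta>"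
  shows "\<forall>z\<in>carrier G. (\<exists>m>0. z [^]\<^bsub>G\<^esub> (m::nat) = \<one>\<^bsub>G\<^esub>) \<and> p z < \<delta> * (3/2) ^ n \<longrightarrow>
     (\<exists>xs. set xs \<subseteq> carrier G \<and> (\<forall>y\<in>set xs. p y < \<delta>) \<and> length xs \<le> 3 ^ n \<and> lprod G xs = z)"
proof (induction n)
  have vg: "valued_group G p" using bb by (rule bbG_vg)
  interpret G: comm_group G using vg by (rule vg_group)
  case 0
  show ?case
  proof (intro ballI impI)
    fix z assume z: "z \<in> carrier G" and h: "(\<exists>m>0. z [^]\<^bsub>G\<^esub> (m::nat) = \<one>\<^bsub>G\<^esub>) \<and> p z < \<delta> * (3 / 2) ^ 0"
    show "\<exists>xs. set xs \<subseteq> carrier G \<and> (\<forall>y\<in>set xs. p y < \<delta>) \<and> length xs \<le> 3 ^ 0 \<and> lprod G xs = z"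
      using z h by (intro exI[of _ "[z]"]) simp
  qed
next
  have vg: "valued_group G p" using bb by (rule bbG_vg)
  interpret G: comm_group G using vg by (rule vg_group)
  have pnn: "\<And>x. x \<in> carrier G \<Longrightarrow> 0 \<le> p x" using vg by (simp add: valued_group_def)
  case (Suc n)
  show ?case
  proof (intro ballI impI)
    fix z assume z: "z \<in> carrier G" and h: "(\<exists>m>0. z [^]\<^bsub>G\<^esub> (m::nat) = \<one>\<^bsub>G\<^esub>) \<and> p z < \<delta> * (3 / 2) ^ Suc n"
    define P where "P = (\<lambda>m::nat. 0 < m \<and> z [^]\<^bsub>G\<^esub> m = \<one>\<^bsub>G\<^esub>)"
    define m where "m = (LEAST m. P m)"
    have exP: "\<exists>m. P m" using h by (auto simp: P_def)
    have Pm: "P m" unfolding m_def using exP by (rule LeastI_ex)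
    have mmin: "\<forall>j. 0 < j \<and> j < m \<longrightarrow> z [^]\<^bsub>G\<^esub> j \<noteq> \<one>\<^bsub>G\<^esub>"
      using not_less_Least[of _ P] unfolding m_def P_def by blast
    define \<epsilon> where "\<epsilon> = min (\<delta>/2) (1/3)"
    have e: "0 < \<epsilon>" "\<epsilon> < 1" using d by (auto simp: \<epsilon>_def)
    have m0: "0 < m" and zm: "z [^]\<^bsub>G\<^esub> m = \<one>\<^bsub>G\<^esub>" using Pm by (simp_all add: P_def)
    from split_step[OF bb z m0 zm mmin e] obtain e h1 h2 where eh: "e \<in> carrier G" "h1 \<in> carrier G" "h2 \<in> carrier G"
      "z = e \<otimes>\<^bsub>G\<^esub> (h1 \<otimes>\<^bsub>G\<^esub> h2)" "p e \<le> \<epsilon>"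
      "p h1 \<le> (1 + \<epsilon>) * p z / 2" "p h2 \<le> (1 + \<epsilon>) * p z / 2"
      "h1 [^]\<^bsub>G\<^esub> m = \<one>\<^bsub>G\<^esub>" "h2 [^]\<^bsub>G\<^esub> m = \<one>\<^bsub>G\<^esub>"
      by (elim exE conjE) 
    have pz: "0 \<le> p z" using pnn z .
    have bnd: "(1 + \<epsilon>) * p z / 2 < \<delta> * (3/2) ^ n"
    proof -
      have "1 + \<epsilon> \<le> 4/3" by (simp add: \<epsilon>_def)
      hence "(1 + \<epsilon>) * p z \<le> (4/3) * p z" by (rule mult_right_mono[OF _ pz])
      hence "(1 + \<epsilon>) * p z / 2 \<le> (2/3) * p z" by simp
      also have "\<dots> < (2/3) * (\<delta> * (3/2) ^ Suc n)" using h by simp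
      also have "\<dots> = \<delta> * (3/2) ^ n" by simp
      finally show ?thesis .
    qed
    have a1: "(\<exists>m>0. h1 [^]\<^bsub>G\<^esub> (m::nat) = \<one>\<^bsub>G\<^esub>) \<and> p h1 < \<delta> * (3/2) ^ n"
      using eh(6,8) bnd m0 by auto
    have a2: "(\<exists>m>0. h2 [^]\<^bsub>G\<^esub> (m::nat) = \<one>\<^bsub>G\<^esub>) \<and> p h2 < \<delta> * (3/2) ^ n"
      using eh(7,9) bnd m0 by auto
    from Suc.IH[rule_format, OF eh(2) a1] obtain xs1 where
      xs1: "set xs1 \<subseteq> carrier G" "\<forall>y\<in>set xs1. p y < \<delta>" "length xs1 \<le> 3 ^ n" "lprod G xs1 = h1"
      by (elim exE conjE)
    from Suc.IH[rule_format, OF eh(3) a2] obtain xs2 where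
      xs2: "set xs2 \<subseteq> carrier G" "\<forall>y\<in>set xs2. p y < \<delta>" "length xs2 \<le> 3 ^ n" "lprod G xs2 = h2"
      by (elim exE conjE)
    have ped: "p e < \<delta>" using eh(5) d by (simp add: \<epsilon>_def)
    have l: "lprod G (e # xs1 @ xs2) = z"
      using eh(4) xs1 xs2 lprod_append[OF G.is_monoid xs1(1) xs2(1)] by simp
    show "\<exists>xs. set xs \<subseteq> carrier G \<and> (\<forall>y\<in>set xs. p y < \<delta>) \<and> length xs \<le> 3 ^ Suc n \<and> lprod G xs = z"
    proof (intro exI[of _ "e # xs1 @ xs2"] conjI)
      show "set (e # xs1 @ xs2) \<subseteq> carrier G" using eh(1) xs1(1) xs2(1) by simp
      show "\<forall>y\<in>set (e # xs1 @ xs2). p y < \<delta>" using ped xs1(2) xs2(2) by auto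
      have h3: "(1::nat) \<le> 3 ^ n" by simp
      show "length (e # xs1 @ xs2) \<le> 3 ^ Suc n" using xs1(3) xs2(3) h3
        by (simp only: length_Cons length_append power_Suc)
      show "lprod G (e # xs1 @ xs2) = z" by (rule l)
    qed
  qed
qed

lemma Bnd_one:
  assumes bb: "is_bbG 1 N G p"
  shows "Bnd G p"
  unfolding Bnd_def
proof (intro allI impI)
  fix \<delta> :: real assume d: "0 < \<delta>"
  have vg: "valued_group G p" using bb by (rule bbG_vg)
  interpret G: comm_group G using vg by (rule vg_group)
  have pb: "\<And>x. x \<in> carrier G \<Longrightarrow> p x \<le> 1"
    using bb by (auto simp: is_bbG_def in_frakG_def bounded_by_def)
  obtain n0 where n0: "1 / \<delta> < (3/2::real) ^ n0" using real_arch_pow[of "3/2" "1/\<delta>"] by auto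
  have big: "1 < \<delta> * (3/2) ^ n0" using n0 d by (simp add: field_simps)
  have "\<forall>x\<in>carrier G. \<exists>xs. set xs \<subseteq> carrier G \<and> (\<forall>y\<in>set xs. p y < \<delta>) \<and> length xs \<le> 3 ^ n0 + 1 \<and> lprod G xs = x"
  proof
    fix x assume x: "x \<in> carrier G"
    obtain y where y: "y \<in> carrier G" "\<exists>m>0. y [^]\<^bsub>G\<^esub> (m::nat) = \<one>\<^bsub>G\<^esub>" "p (x \<otimes>\<^bsub>G\<^esub> inv\<^bsub>G\<^esub> y) < \<delta>"
    proof (cases "N = 0")
      case True
      hence "prop_G3 G p" using bb by (simp add: is_bbG_def)
      then obtain y where "y \<in> carrier G" "\<exists>n::nat. 0 < n \<and> y [^]\<^bsub>G\<^esub> n = \<one>\<^bsub>G\<^esub>" "vdist G p x y < \<delta>"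
        using x d unfolding prop_G3_def by blast
      thus ?thesis using that by (auto simp: vdist_def)
    next
      case False
      have "x [^]\<^bsub>G\<^esub> N = \<one>\<^bsub>G\<^esub>" using bb False x by (auto simp: is_bbG_def in_frakG_def has_exponent_def)
      moreover have "p (x \<otimes>\<^bsub>G\<^esub> inv\<^bsub>G\<^esub> x) = 0" using x vg by (simp add: valued_group_def)
      ultimately show ?thesis using that[of x] x False d by auto
    qed
    have "p y < \<delta> * (3/2) ^ n0" using pb[OF y(1)] big by simp
    then obtain ys where ys: "set ys \<subseteq> carrier G" "\<forall>y\<in>set ys. p y < \<delta>" "length ys \<le> 3 ^ n0" "lprod G ys = y"
      using fin_split[OF bb d, of n0] y by blast
    have ec: "x \<otimes>\<^bsub>G\<^esub> inv\<^bsub>G\<^esub> y \<in> carrier G" using x y by simp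
    have "lprod G ((x \<otimes>\<^bsub>G\<^esub> inv\<^bsub>G\<^esub> y) # ys) = x" using ys x y by (simp add: G.m_assoc)
    thus "\<exists>xs. set xs \<subseteq> carrier G \<and> (\<forall>y\<in>set xs. p y < \<delta>) \<and> length xs \<le> 3 ^ n0 + 1 \<and> lprod G xs = x"
      using ys ec y(3) by (intro exI[of _ "(x \<otimes>\<^bsub>G\<^esub> inv\<^bsub>G\<^esub> y) # ys"]) auto
  qed
  thus "\<exists>n. \<forall>x\<in>carrier G. \<exists>xs. set xs \<subseteq> carrier G \<and> (\<forall>y\<in>set xs. p y < \<delta>) \<and> length xs \<le> n \<and> lprod G xs = x"
    by blast
qed

lemma exp_of_bbG: "is_bbG r N G p \<Longrightarrow> N \<noteq> 0 \<Longrightarrow> x \<in> carrier G \<Longrightarrow> x [^]\<^bsub>G\<^esub> N = \<one>\<^bsub>G\<^esub>"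
  by (simp add: is_bbG_def in_frakG_def has_exponent_def)

lemma contra1:
  assumes g: "group G" and g': "group G'" and hom: "f \<in> hom G G'" and inj: "inj_on f (carrier G)"
    and x: "x \<in> carrier G" "x [^]\<^bsub>G\<^esub> (M::nat) \<noteq> \<one>\<^bsub>G\<^esub>"
    and ex: "f x [^]\<^bsub>G'\<^esub> M = \<one>\<^bsub>G'\<^esub>"
  shows False
proof -
  have "f (x [^]\<^bsub>G\<^esub> M) = f \<one>\<^bsub>G\<^esub>" using hom_nat_pow[OF hom x(1) g g'] ex hom_one[OF hom g g'] by simp
  moreover have "x [^]\<^bsub>G\<^esub> M \<in> carrier G" using x(1) g by (simp add: group.is_monoid monoid.nat_pow_closed)
  moreover have "\<one>\<^bsub>G\<^esub> \<in> carrier G" using g by (simp add: group.is_monoid monoid.one_closed)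
  ultimately show False using inj x(2) by (auto dest: inj_onD)
qed

lemma contra2:
  assumes g: "group G" and g': "group G'" and hom: "f \<in> hom G G'" and bij: "bij_betw f (carrier G) (carrier G')"
    and x: "x' \<in> carrier G'" "x' [^]\<^bsub>G'\<^esub> (M::nat) \<noteq> \<one>\<^bsub>G'\<^esub>"
    and ex: "\<forall>x\<in>carrier G. x [^]\<^bsub>G\<^esub> M = \<one>\<^bsub>G\<^esub>"
  shows False
proof -
  have "x' \<in> f ` carrier G" using bij x(1) by (simp add: bij_betw_def)
  then obtain x where xx: "x \<in> carrier G" "x' = f x" by (rule imageE) (rule that, auto)
  have "x' [^]\<^bsub>G'\<^esub> M = f (x [^]\<^bsub>G\<^esub> M)" using hom_nat_pow[OF hom xx(1) g g'] xx(2) by simp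
  also have "\<dots> = \<one>\<^bsub>G'\<^esub>" using ex xx(1) hom_one[OF hom g g'] by simp
  finally show False using x(2) by simp
qed

theorem corollary5p8:
  fixes G :: "('a, 'm) monoid_scheme" and p :: "'a \<Rightarrow> real"
    and G' :: "('b, 'n) monoid_scheme" and p' :: "'b \<Rightarrow> real"
    and r r' :: ereal and N N' :: nat
  assumes "r \<in> {1, \<infinity>}" and "r' \<in> {1, \<infinity>}"
    and "N \<noteq> 1" and "N' \<noteq> 1"
    and "(r, N) \<noteq> (r', N')"
    and "is_bbG r N G p" and "is_bbG r' N' G' p'"
  shows "\<not> (\<exists>f. top_group_iso G p G' p' f)"
proof
  assume "\<exists>f. top_group_iso G p G' p' f"
  then obtain f where iso: "top_group_iso G p G' p' f" by blast
  note r = assms(1) and r' = assms(2) and N = assms(3) and N' = assms(4) and ne = assms(5)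
    and bb = assms(6) and bb' = assms(7)
  have vg: "valued_group G p" using bb by (rule bbG_vg)
  have vg': "valued_group G' p'" using bb' by (rule bbG_vg)
  have g: "group G" and g': "group G'" using vg vg' by (simp_all add: valued_group_def comm_group_def)
  have hom: "f \<in> hom G G'" and bij: "bij_betw f (carrier G) (carrier G')"
    using iso by (simp_all add: top_group_iso_def)
  have inj: "inj_on f (carrier G)" using bij by (simp add: bij_betw_def)
  have c1: "ereal 1 \<le> r" using r by auto
  have c1': "ereal 1 \<le> r'" using r' by auto
  show False
  proof (cases "N = N'")
    case False
    show False
    proof (cases "N = 0")
      case True
      hence N'2: "2 \<le> N'" using False N' by auto
      obtain x where x: "x \<in> carrier G" "\<forall>j. 0 < j \<and> j < N' + 1 \<longrightarrow> x [^]\<^bsub>G\<^esub> j \<noteq> \<one>\<^bsub>G\<^esub>"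
        using cyc_elem[OF bb _ _ _ c1, of "N' + 1"] N'2 True by auto
      have "x [^]\<^bsub>G\<^esub> N' \<noteq> \<one>\<^bsub>G\<^esub>" using x(2) N'2 by auto
      moreover have "f x [^]\<^bsub>G'\<^esub> N' = \<one>\<^bsub>G'\<^esub>"
        using exp_of_bbG[OF bb' _ hom_in_carrier[OF hom x(1)]] N'2 by auto
      ultimately show False using contra1[OF g g' hom inj x(1)] by blast
    next
      case N0: False
      show False
      proof (cases "N' = 0")
        case True
        hence N2: "2 \<le> N" using N0 N by auto
        obtain x' where x: "x' \<in> carrier G'" "\<forall>j. 0 < j \<and> j < N + 1 \<longrightarrow> x' [^]\<^bsub>G'\<^esub> j \<noteq> \<one>\<^bsub>G'\<^esub>"
          using cyc_elem[OF bb' _ _ _ c1', of "N + 1"] N2 True by auto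
        have "x' [^]\<^bsub>G'\<^esub> N \<noteq> \<one>\<^bsub>G'\<^esub>" using x(2) N2 by auto
        moreover have "\<forall>x\<in>carrier G. x [^]\<^bsub>G\<^esub> N = \<one>\<^bsub>G\<^esub>" using exp_of_bbG[OF bb N0] by blast
        ultimately show False using contra2[OF g g' hom bij x(1)] by blast
      next
        case N'0: False
        show False
        proof (cases "N < N'")
          case True
          obtain x' where x: "x' \<in> carrier G'" "\<forall>j. 0 < j \<and> j < N' \<longrightarrow> x' [^]\<^bsub>G'\<^esub> j \<noteq> \<one>\<^bsub>G'\<^esub>"
            using cyc_elem[OF bb' _ _ _ c1', of "N'"] N' N'0 by auto
          have "x' [^]\<^bsub>G'\<^esub> N \<noteq> \<one>\<^bsub>G'\<^esub>" using x(2) True N0 by auto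
          moreover have "\<forall>x\<in>carrier G. x [^]\<^bsub>G\<^esub> N = \<one>\<^bsub>G\<^esub>" using exp_of_bbG[OF bb N0] by blast
          ultimately show False using contra2[OF g g' hom bij x(1)] by blast
        next
          case False
          hence lt: "N' < N" using \<open>N \<noteq> N'\<close> by auto
          obtain x where x: "x \<in> carrier G" "\<forall>j. 0 < j \<and> j < N \<longrightarrow> x [^]\<^bsub>G\<^esub> j \<noteq> \<one>\<^bsub>G\<^esub>"
            using cyc_elem[OF bb _ _ _ c1, of "N"] N N0 by auto
          have "x [^]\<^bsub>G\<^esub> N' \<noteq> \<one>\<^bsub>G\<^esub>" using x(2) lt N'0 by auto
          moreover have "f x [^]\<^bsub>G'\<^esub> N' = \<one>\<^bsub>G'\<^esub>"
            using exp_of_bbG[OF bb' N'0 hom_in_carrier[OF hom x(1)]] .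
          ultimately show False using contra1[OF g g' hom inj x(1)] by blast
        qed
      qed
    qed
  next
    case True
    hence rr: "r \<noteq> r'" using ne by auto
    show False
    proof (cases "r = 1")
      case True
      hence r'i: "r' = \<infinity>" using rr r' by auto
      have "Bnd G p" using bb True by (simp add: Bnd_one)
      hence "Bnd G' p'" using Bnd_transfer1[OF vg vg' iso] by blast
      thus False using not_Bnd_infty[OF _ N'] bb' r'i by blast
    next
      case False
      hence ri: "r = \<infinity>" and r'1: "r' = 1" using rr r r' by auto
      have "Bnd G' p'" using bb' r'1 by (simp add: Bnd_one)
      hence "Bnd G p" using Bnd_transfer2[OF vg vg' iso] by blast
      thus False using not_Bnd_infty[OF _ N] bb ri by blast
    qed
  qed
qed

end
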